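(* Let $d\ge2$ and $c\in\mathbb{C}$ be such that $f(x)=x^d+c$ is not linearly conjugate to $x^d$ or to $\pm T_d(x)$, and let $n$ be a positive integer. If $A,B\in\mathbb{C}[x]$ are non-constant with $f^n\circ A=A\circ B$ and $\gcd(d,\deg A)=1$, then $A$ is linear.
   Context: $T_d$ is the Chebyshev polynomial of degree $d$ ($T_d(z+1/z)=z^d+1/z^d$); linear conjugacy means conjugacy by a linear polynomial. $f^n$ is the $n$-th iterate. *)

theory Defs
  imports "HOL-Computational_Algebra.Polynomial"
begin

text \<open>Chebyshev (Dickson) polynomials normalised so that T_d(z+1/z) = z^d + 1/z^d:
  T_0 = 2, T_1 = x, T_(n+2) = x T_(n+1) - T_n.\<close>
fun cheb :: "nat \<Rightarrow> complex poly" where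
  "cheb 0 = [:2:]"
| "cheb (Suc 0) = [:0, 1:]"
| "cheb (Suc (Suc n)) = [:0, 1:] * cheb (Suc n) - cheb n"

definition poly_iter :: "complex poly \<Rightarrow> nat \<Rightarrow> complex poly" where
  "poly_iter f n = ((\<lambda>p. pcompose f p) ^^ n) [:0, 1:]"

definition lin_conj :: "complex poly \<Rightarrow> complex poly \<Rightarrow> bool" where
  "lin_conj f g \<longleftrightarrow> (\<exists>L. degree L = 1 \<and> pcompose f L = pcompose L g)"

end

theory Submission imports Defs "HOL-Computational_Algebra.Fundamental_Theorem_Algebra" begin

lemma sum_order_eq_degree:
  fixes p :: "complex poly"
  assumes "p \<noteq> 0"
  shows "(\<Sum>z\<in>{z. poly p z = 0}. order z p) = degree p"
proof -
  have "degree p = size (proots p)" by (simp add: size_proots_complex)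
  also have "\<dots> = (\<Sum>z\<in>set_mset (proots p). count (proots p) z)"
    by (simp add: size_multiset_overloaded_eq)
  also have "\<dots> = (\<Sum>z\<in>{z. poly p z = 0}. order z p)"
    using assms by simp
  finally show ?thesis by simp
qed

lemma sum_order_le_degree:
  fixes p :: "complex poly"
  assumes "p \<noteq> 0" "finite Z"
  shows "(\<Sum>z\<in>Z. order z p) \<le> degree p"
proof -
  have "(\<Sum>z\<in>Z. order z p) = (\<Sum>z\<in>Z \<inter> {z. poly p z = 0}. order z p)"
    using assms by (intro sum.mono_neutral_right) (auto simp: order_0I)
  also have "\<dots> \<le> (\<Sum>z\<in>{z. poly p z = 0}. order z p)"
    using assms poly_roots_finite by (intro sum_mono2) auto
  finally show ?thesis using sum_order_eq_degree[OF assms(1)] by simp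
qed

lemma degree_minus_const:
  fixes P :: "complex poly"
  assumes "degree P > 0"
  shows "degree (P - [:w:]) = degree P"
proof -
  have e: "P - [:w:] = P + [:-w:]" by simp
  show ?thesis using assms by (subst e, subst degree_add_eq_left) auto
qed

lemma minus_const_nz:
  fixes P :: "complex poly"
  assumes "degree P > 0"
  shows "P - [:w:] \<noteq> 0"
  using degree_minus_const[OF assms, of w] assms by auto

lemma fibsum:
  fixes P :: "complex poly"
  assumes "degree P > 0"
  shows "degree P = card {z. poly P z = w} + (\<Sum>z\<in>{z. poly P z = w}. order z (pderiv P))"
proof -
  let ?Q = "P - [:w:]"
  have Q0: "?Q \<noteq> 0" using minus_const_nz[OF assms] .
  have dQ: "degree ?Q = degree P" using degree_minus_const[OF assms] .
  have fib: "{z. poly ?Q z = 0} = {z. poly P z = w}" by auto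
  have dQ': "pderiv ?Q = pderiv P" by (simp add: pderiv_diff)
  have "degree P = (\<Sum>z\<in>{z. poly P z = w}. order z ?Q)"
    using sum_order_eq_degree[OF Q0] dQ fib by simp
  also have "\<dots> = (\<Sum>z\<in>{z. poly P z = w}. Suc (order z (pderiv P)))"
  proof (intro sum.cong refl)
    fix z assume "z \<in> {z. poly P z = w}"
    hence "poly ?Q z = 0" by simp
    from order_pderiv[OF Q0 this] dQ' show "order z ?Q = Suc (order z (pderiv P))" by simp
  qed
  also have "\<dots> = card {z. poly P z = w} + (\<Sum>z\<in>{z. poly P z = w}. order z (pderiv P))"
    by (simp add: sum_Suc)
  finally show ?thesis .
qed

lemma fib_finite:
  fixes P :: "complex poly"
  assumes "degree P > 0"
  shows "finite {z. poly P z = w}"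
proof -
  have "{z. poly P z = w} = {z. poly (P - [:w:]) z = 0}" by auto
  thus ?thesis using poly_roots_finite[OF minus_const_nz[OF assms]] by simp
qed

lemma fib_card_le:
  fixes P :: "complex poly"
  assumes "degree P > 0"
  shows "card {z. poly P z = w} \<le> degree P"
  using fibsum[OF assms, of w] by linarith

lemma RH:
  fixes P :: "complex poly"
  assumes "degree P > 0" "finite W"
  shows "(\<Sum>w\<in>W. degree P - card {z. poly P z = w}) \<le> degree P - 1"
proof -
  have P'0: "pderiv P \<noteq> 0" using assms pderiv_eq_0_iff[of P] by auto
  have "(\<Sum>w\<in>W. degree P - card {z. poly P z = w})
      = (\<Sum>w\<in>W. \<Sum>z\<in>{z. poly P z = w}. order z (pderiv P))"
    by (intro sum.cong refl) (use fibsum[OF assms(1)] in \<open>metis add_diff_cancel_left'\<close>)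
  also have "\<dots> = (\<Sum>z\<in>(\<Union>w\<in>W. {z. poly P z = w}). order z (pderiv P))"
    by (rule sum.UNION_disjoint[symmetric]) (use assms fib_finite in auto)
  also have "\<dots> \<le> degree (pderiv P)"
    by (rule sum_order_le_degree[OF P'0]) (use assms fib_finite in auto)
  also have "\<dots> = degree P - 1" by (simp add: degree_pderiv)
  finally show ?thesis .
qed

lemma crit_iff:
  fixes P :: "complex poly"
  assumes "degree P > 0"
  shows "card {z. poly P z = w} < degree P \<longleftrightarrow> (\<exists>z. poly P z = w \<and> poly (pderiv P) z = 0)"
proof -
  have P'0: "pderiv P \<noteq> 0" using assms pderiv_eq_0_iff[of P] by auto
  have "card {z. poly P z = w} < degree P \<longleftrightarrow> (\<Sum>z\<in>{z. poly P z = w}. order z (pderiv P)) \<noteq> 0"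
    using fibsum[OF assms, of w] by linarith
  also have "\<dots> \<longleftrightarrow> (\<exists>z. poly P z = w \<and> order z (pderiv P) \<noteq> 0)"
    using fib_finite[OF assms] by simp
  also have "\<dots> \<longleftrightarrow> (\<exists>z. poly P z = w \<and> poly (pderiv P) z = 0)"
    using P'0 order_root by blast
  finally show ?thesis .
qed

lemma order_power_gen:
  fixes p :: "complex poly"
  assumes "p \<noteq> 0"
  shows "order z (p ^ n) = n * order z p"
  using assms by (induction n) (auto simp: order_mult)

lemma order_comp:
  fixes p q :: "complex poly"
  assumes "p \<noteq> 0" "degree q > 0"
  shows "order z (pcompose p q) = order (poly q z) p * order z (q - [:poly q z:])"
proof -
  define w where "w = poly q z"
  obtain R where R: "p = [:-w,1:] ^ order w p * R" "\<not> [:-w,1:] dvd R"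
    using order_decomp[OF assms(1)] by blast
  have R0: "R \<noteq> 0" using R assms(1) by auto
  have lin: "pcompose [:-w,1:] q = q - [:w:]"
    by (simp add: pcompose_pCons)
  have pw: "pcompose ([:-w,1:] ^ k) q = (q - [:w:]) ^ k" for k
  proof (induction k)
    case (Suc k)
    have "pcompose ([:-w,1:]^Suc k) q = pcompose [:-w,1:] q * pcompose ([:-w,1:]^k) q"
      by (simp only: power_Suc pcompose_mult)
    then show ?case using Suc lin by simp
  qed (simp add: pcompose_1)
  have eq: "pcompose p q = (q - [:w:]) ^ order w p * pcompose R q"
    by (subst R(1)) (simp add: pcompose_mult pw)
  have nz1: "q - [:w:] \<noteq> 0" using minus_const_nz[OF assms(2)] .
  have nz2: "pcompose R q \<noteq> 0" using pcompose_eq_0[OF _ assms(2)] R0 by blast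
  have "poly (pcompose R q) z \<noteq> 0"
    using R(2) by (simp add: poly_pcompose w_def[symmetric] poly_eq_0_iff_dvd)
  hence o2: "order z (pcompose R q) = 0" by (rule order_0I)
  have "order z (pcompose p q) = order z ((q - [:w:]) ^ order w p) + order z (pcompose R q)"
    unfolding eq by (rule order_mult) (use nz1 nz2 in simp)
  thus ?thesis using o2 nz1 by (simp add: order_power_gen w_def)
qed


lemma decomp_pow:
  fixes p :: "complex poly"
  assumes "p \<noteq> 0" "d > 0" "\<forall>z. z \<noteq> r \<longrightarrow> d dvd order z p"
  shows "\<exists>Q. p = smult (lead_coeff p) ([:-r,1:]^(order r p) * Q^d)"
proof -
  define Rt where "Rt = {z. poly p z = 0}"
  have fin: "finite Rt" unfolding Rt_def using poly_roots_finite[OF assms(1)] .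
  have p_eq: "p = smult (lead_coeff p) (\<Prod>z\<in>Rt. [:-z,1:]^order z p)"
    unfolding Rt_def using complex_poly_decompose[of p] by simp
  have split: "(\<Prod>z\<in>Rt. [:-z,1:]^order z p) = [:-r,1:]^(order r p) * (\<Prod>z\<in>Rt-{r}. [:-z,1:]^order z p)"
  proof (cases "r \<in> Rt")
    case True thus ?thesis using fin by (simp add: prod.remove)
  next
    case False
    hence "order r p = 0" unfolding Rt_def by (auto intro: order_0I)
    thus ?thesis using False by simp
  qed
  define Q where "Q = (\<Prod>z\<in>Rt-{r}. [:-z,1:]^(order z p div d))"
  have "Q^d = (\<Prod>z\<in>Rt-{r}. ([:-z,1:]^(order z p div d))^d)"
    unfolding Q_def by (rule prod_power_distrib)
  also have "\<dots> = (\<Prod>z\<in>Rt-{r}. [:-z,1:]^order z p)"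
  proof (intro prod.cong refl)
    fix z assume "z \<in> Rt - {r}"
    hence "d dvd order z p" using assms(3) by auto
    hence "order z p div d * d = order z p" by simp
    thus "([:-z,1:]^(order z p div d))^d = [:-z,1:]^order z p"
      by (metis power_mult)
  qed
  finally show ?thesis using p_eq split by metis
qed

lemma decomp_all:
  fixes p :: "complex poly"
  assumes "p \<noteq> 0" "d > 0" "\<forall>z. d dvd order z p"
  shows "\<exists>S. p = smult (lead_coeff p) (S^d)"
proof -
  obtain r :: complex where r: "True" by simp
  obtain Q where Q: "p = smult (lead_coeff p) ([:-r,1:]^(order r p) * Q^d)"
    using decomp_pow[OF assms(1,2)] assms(3) by blast
  have "order r p div d * d = order r p" using assms(3) by simp
  hence "[:-r,1:]^(order r p) = ([:-r,1:]^(order r p div d))^d" by (metis power_mult)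
  hence "p = smult (lead_coeff p) (([:-r,1:]^(order r p div d) * Q)^d)"
    using Q by (simp add: power_mult_distrib)
  thus ?thesis by blast
qed

lemma pow_eq_smult:
  fixes H V :: "complex poly"
  assumes "H^d = V^d" "d > 0"
  shows "\<exists>\<zeta>. H = smult \<zeta> V"
proof (cases "V = 0")
  case True
  hence "H^d = 0" using assms by simp
  hence "H = 0" by simp
  thus ?thesis using True by auto
next
  case False
  hence H0: "H \<noteq> 0" using assms by (metis power_eq_0_iff)
  have ord: "order z H = order z V" for z
  proof -
    have "order z (H^d) = order z (V^d)" using assms by simp
    hence "d * order z H = d * order z V" using H0 False by (simp add: order_power_gen)
    thus ?thesis using assms(2) by simp
  qed
  have "poly H z = 0 \<longleftrightarrow> poly V z = 0" for z
    using order_root[of H z] order_root[of V z] ord[of z] H0 False by simp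
  hence rts: "{z. poly H z = 0} = {z. poly V z = 0}" by auto
  define X where "X = (\<Prod>z|poly H z = 0. [:-z, 1:] ^ order z H)"
  have hx: "H = smult (lead_coeff H) X" unfolding X_def using complex_poly_decompose[of H] by simp
  have vx: "V = smult (lead_coeff V) X" unfolding X_def rts
    using complex_poly_decompose[of V] ord by simp
  have "H = smult (lead_coeff H / lead_coeff V) V"
    using False by (subst vx) (simp add: hx[symmetric])
  thus ?thesis by blast
qed

lemma coprime_from_sub:
  fixes m k d :: nat
  assumes "coprime m d" "d dvd (m - k)" "k \<le> m"
  shows "coprime k d"
proof (rule coprimeI)
  fix g assume g: "g dvd k" "g dvd d"
  hence "g dvd (m - k)" using assms(2) dvd_trans by blast
  hence "g dvd (m - k) + k" using g(1) by simp
  hence "g dvd m" using assms(3) by simp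
  thus "is_unit g" using assms(1) g(2) coprime_common_divisor by blast
qed


lemma SL:
  fixes A B H :: "complex poly"
  assumes d2: "d \<ge> 2" and dA: "degree A > 0" and dB: "degree B > 0"
    and cop: "coprime (degree A) d" and eq: "pcompose A B - [:c:] = H ^ d"
  shows "\<exists>r a k Q b S. a \<noteq> 0 \<and> b \<noteq> 0 \<and> coprime k d \<and>
           A - [:c:] = smult a ([:-r,1:]^k * Q^d) \<and> B = [:r:] + smult b (S^d)"
proof -
  define Ac where "Ac = A - [:c:]"
  define D where "D = degree B"
  have Ac0: "Ac \<noteq> 0" unfolding Ac_def using minus_const_nz[OF dA] .
  have dAc: "degree Ac = degree A" unfolding Ac_def using degree_minus_const[OF dA] .
  have comp: "pcompose Ac B = H^d" unfolding Ac_def using eq by (simp add: pcompose_diff)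
  have "degree (pcompose Ac B) > 0" using dAc dA dB by (simp add: degree_pcompose)
  hence H0: "H \<noteq> 0" using comp d2 by (cases "H = 0") (auto simp: power_0_left)
  have f1: "d dvd order s Ac * order z (B - [:s:])" if "poly B z = s" for s z
  proof -
    have "order z (pcompose Ac B) = order s Ac * order z (B - [:s:])"
      using order_comp[OF Ac0 dB, of z] that by simp
    also have "order z (pcompose Ac B) = d * order z H"
      using comp order_power_gen[OF H0] by simp
    finally show ?thesis by (metis dvd_triv_left)
  qed
  have f2: "2 * card {z. poly B z = s} \<le> D" if "poly Ac s = 0" "\<not> d dvd order s Ac" for s
  proof -
    let ?Bs = "B - [:s:]"
    have Bs0: "?Bs \<noteq> 0" using minus_const_nz[OF dB] .
    have fib: "{z. poly ?Bs z = 0} = {z. poly B z = s}" by auto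
    have ge2: "order z ?Bs \<ge> 2" if "poly B z = s" for z
    proof -
      have "order z ?Bs \<noteq> 0" using order_root[of ?Bs z] Bs0 that by simp
      moreover have "order z ?Bs \<noteq> 1" using f1[OF that] \<open>\<not> d dvd order s Ac\<close> by auto
      ultimately show ?thesis by linarith
    qed
    have "2 * card {z. poly B z = s} = (\<Sum>z\<in>{z. poly B z = s}. 2)" by simp
    also have "\<dots> \<le> (\<Sum>z\<in>{z. poly B z = s}. order z ?Bs)"
      by (intro sum_mono) (use ge2 in auto)
    also have "\<dots> = degree ?Bs" using sum_order_eq_degree[OF Bs0] fib by simp
    also have "\<dots> = D" unfolding D_def using degree_minus_const[OF dB] .
    finally show ?thesis .
  qed
  have uniq: "s1 = s2" if "poly Ac s1 = 0" "\<not> d dvd order s1 Ac"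
      "poly Ac s2 = 0" "\<not> d dvd order s2 Ac" for s1 s2
  proof (rule ccontr)
    assume ne: "s1 \<noteq> s2"
    have h1: "2 * card {z. poly B z = s1} \<le> D" using f2 that by blast
    have h2: "2 * card {z. poly B z = s2} \<le> D" using f2 that by blast
    have "(\<Sum>w\<in>{s1,s2}. degree B - card {z. poly B z = w}) \<le> degree B - 1"
      using RH[OF dB] by simp
    hence "(D - card {z. poly B z = s1}) + (D - card {z. poly B z = s2}) \<le> D - 1"
      using ne unfolding D_def by simp
    thus False using h1 h2 dB unfolding D_def by linarith
  qed
  define Rt where "Rt = {z. poly Ac z = 0}"
  have finRt: "finite Rt" unfolding Rt_def using poly_roots_finite[OF Ac0] .
  have sumRt: "(\<Sum>z\<in>Rt. order z Ac) = degree A"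
    unfolding Rt_def using sum_order_eq_degree[OF Ac0] dAc by simp
  obtain r where r: "poly Ac r = 0" "\<not> d dvd order r Ac"
  proof -
    have "\<exists>r. poly Ac r = 0 \<and> \<not> d dvd order r Ac"
    proof (rule ccontr)
      assume "\<not> ?thesis"
      hence "\<forall>z\<in>Rt. d dvd order z Ac" unfolding Rt_def by auto
      hence "d dvd degree A" using sumRt by (metis dvd_sum)
      hence "is_unit d" using cop by (metis coprime_common_divisor dvd_refl)
      thus False using d2 by simp
    qed
    thus ?thesis using that by blast
  qed
  define k where "k = order r Ac"
  have rRt: "r \<in> Rt" unfolding Rt_def using r by simp
  have "degree A = k + (\<Sum>z\<in>Rt-{r}. order z Ac)"
    using sumRt finRt rRt unfolding k_def by (simp add: sum.remove)
  moreover have "d dvd (\<Sum>z\<in>Rt-{r}. order z Ac)"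
  proof (rule dvd_sum)
    fix z assume "z \<in> Rt - {r}"
    thus "d dvd order z Ac" using uniq[of z r] r unfolding Rt_def by auto
  qed
  ultimately have copk: "coprime k d"
    using coprime_from_sub[OF cop, of k] by simp
  have allB: "\<forall>z. d dvd order z (B - [:r:])"
  proof
    fix z
    show "d dvd order z (B - [:r:])"
    proof (cases "poly B z = r")
      case True
      have "d dvd k * order z (B - [:r:])" using f1[OF True] unfolding k_def .
      thus ?thesis using copk by (metis coprime_commute coprime_dvd_mult_right_iff)
    next
      case False
      hence "order z (B - [:r:]) = 0" by (intro order_0I) simp
      thus ?thesis by simp
    qed
  qed
  obtain S where S: "B - [:r:] = smult (lead_coeff (B - [:r:])) (S^d)"
    using decomp_all[OF minus_const_nz[OF dB] _ allB] d2 by auto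
  have allA: "\<forall>z. z \<noteq> r \<longrightarrow> d dvd order z Ac"
  proof (intro allI impI)
    fix z assume "z \<noteq> r"
    show "d dvd order z Ac"
    proof (cases "poly Ac z = 0")
      case True thus ?thesis using uniq[of z r] r \<open>z \<noteq> r\<close> by blast
    next
      case False thus ?thesis by (simp add: order_0I)
    qed
  qed
  obtain Q where Q: "Ac = smult (lead_coeff Ac) ([:-r,1:]^k * Q^d)"
    using decomp_pow[OF Ac0 _ allA] d2 unfolding k_def by auto
  have B: "B = [:r:] + smult (lead_coeff (B - [:r:])) (S^d)"
    using S by (metis add_diff_cancel_left' diff_add_cancel)
  have l1: "lead_coeff Ac \<noteq> 0" using Ac0 by simp
  have l2: "lead_coeff (B - [:r:]) \<noteq> 0" using minus_const_nz[OF dB, of r] leading_coeff_0_iff by blast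
  show ?thesis using l1 l2 copk Q B unfolding Ac_def by blast
qed


lemma nth_root_exists:
  fixes z :: complex
  assumes "n > 0"
  shows "\<exists>w. w ^ n = z"
proof (cases "z = 0")
  case True thus ?thesis using assms by (intro exI[of _ 0]) simp
next
  case False
  from bij_betw_apply[OF bij_betw_nth_root_unity[OF False assms], of 1]
  show ?thesis by auto
qed

lemma poly_ext: "(\<And>x. poly p x = poly q (x::complex)) \<Longrightarrow> p = q"
  using poly_eq_poly_eq_iff by blast

lemma poly_iter_poly: "poly (poly_iter f n) x = (poly f ^^ n) x"
proof (induction n arbitrary: x)
  case 0 thus ?case by (simp add: poly_iter_def)
next
  case (Suc n)
  have "poly_iter f (Suc n) = pcompose f (poly_iter f n)" by (simp add: poly_iter_def)
  thus ?case using Suc by (simp add: poly_pcompose)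
qed

lemma poly_f: "poly (monom 1 d + [:c:]) (y::complex) = y ^ d + c"
  by (simp add: poly_monom)

lemma degree_f: "d > 0 \<Longrightarrow> degree (monom (1::complex) d + [:c:]) = d"
  by (subst degree_add_eq_left) (auto simp: degree_monom_eq)

lemma degree_M: "d > 0 \<Longrightarrow> b \<noteq> 0 \<Longrightarrow> degree ([:r:] + smult b (monom (1::complex) d)) = d"
  by (subst degree_add_eq_right) (auto simp: degree_monom_eq)

lemma lead_nz: "(p::complex poly) \<noteq> 0 \<Longrightarrow> lead_coeff p \<noteq> 0" by simp

lemma CONS:
  fixes A B :: "complex poly"
  assumes d2: "d \<ge> 2" and n0: "n > 0" and dA: "degree A > 0" and dB: "degree B > 0"
    and cop: "coprime (degree A) d"
    and E: "pcompose (poly_iter (monom 1 d + [:c:]) n) A = pcompose A B"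
  shows "\<exists>A2 B2 k r b. b \<noteq> 0 \<and> degree A2 = degree A \<and> degree B2 > 0 \<and> coprime k d \<and>
     pcompose (poly_iter (monom 1 d + [:c:]) n) A2 = pcompose A2 B2 \<and>
     (\<forall>\<xi> u. \<xi>^d = 1 \<longrightarrow> poly A2 (\<xi>*u) = \<xi>^k * poly A2 u) \<and>
     (\<forall>u. (poly A2 u)^d + c = poly A (r + b*u^d))"
proof -
  define f where "f = monom (1::complex) d + [:c:]"
  have pf: "poly f y = y^d + c" for y unfolding f_def by (rule poly_f)
  obtain n1 where n1: "n = Suc n1" using n0 by (cases n) auto
  define H where "H = pcompose (poly_iter f n1) A"
  have pH: "poly H x = (poly f ^^ n1) (poly A x)" for x
    unfolding H_def by (simp add: poly_pcompose poly_iter_poly)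
  have Ef: "(poly f ^^ n) (poly A x) = poly A (poly B x)" for x
    using arg_cong[OF E[folded f_def], of poly] by (metis poly_iter_poly poly_pcompose)
  have Heq: "pcompose A B - [:c:] = H ^ d"
  proof (rule poly_ext)
    show "poly (pcompose A B - [:c:]) x = poly (H ^ d) x" for x
    proof -
      have "poly A (poly B x) = poly f ((poly f ^^ n1) (poly A x))"
        using Ef[of x] unfolding n1 by simp
      thus ?thesis by (simp add: poly_pcompose pH pf)
    qed
  qed
  obtain r a k Q b S where sl: "a \<noteq> 0" "b \<noteq> 0" "coprime k d"
      "A - [:c:] = smult a ([:-r,1:]^k * Q^d)" "B = [:r:] + smult b (S^d)"
    using SL[OF d2 dA dB cop Heq] by blast
  have pA: "poly A y = c + a * (y - r)^k * (poly Q y)^d" for y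
  proof -
    have "poly (A - [:c:]) y = a * (y - r)^k * (poly Q y)^d" using sl(4) by simp
    thus ?thesis by (simp add: algebra_simps)
  qed
  have pB: "poly B x = r + b * (poly S x)^d" for x using sl(5) by simp
  obtain \<omega> where \<omega>: "\<omega>^d = a * b^k" using nth_root_exists d2 by fastforce
  define M where "M = [:r:] + smult b (monom (1::complex) d)"
  have pM: "poly M u = r + b * u^d" for u unfolding M_def by (simp add: poly_monom)
  define A2' where "A2' = smult \<omega> (monom 1 k * pcompose Q M)"
  have pA2': "poly A2' u = \<omega> * u^k * poly Q (r + b*u^d)" for u
    unfolding A2'_def by (simp add: poly_monom poly_pcompose pM)
  have key: "(\<omega> * s^k * q)^d = a * (b * s^d)^k * q^d" for s q :: complex
  proof -
    have "(\<omega> * s^k * q)^d = \<omega>^d * (s^k)^d * q^d" by (simp add: power_mult_distrib)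
    also have "\<dots> = a * b^k * (s^d)^k * q^d" using \<omega> by (simp add: power_mult[symmetric] mult.commute)
    also have "\<dots> = a * (b * s^d)^k * q^d" by (simp add: power_mult_distrib)
    finally show ?thesis .
  qed
  have Heq2: "H^d = (pcompose A2' S)^d"
  proof (rule poly_ext)
    fix x
    have "poly (H^d) x = poly (pcompose A B - [:c:]) x" using Heq by simp
    also have "\<dots> = a * (b * (poly S x)^d)^k * (poly Q (poly B x))^d"
      by (simp add: poly_pcompose pA pB)
    also have "\<dots> = poly ((pcompose A2' S)^d) x"
      by (simp add: poly_pcompose pA2' key pB)
    finally show "poly (H^d) x = poly ((pcompose A2' S)^d) x" .
  qed
  obtain \<zeta> where \<zeta>: "H = smult \<zeta> (pcompose A2' S)"
    using pow_eq_smult[OF Heq2] d2 by auto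
  have "degree (pcompose A B - [:c:]) > 0"
    using degree_minus_const[of "pcompose A B"] dA dB by (simp add: degree_pcompose)
  hence Hd0: "H^d \<noteq> 0" using Heq by (metis degree_0 less_irrefl)
  have "H^d = smult (\<zeta>^d) (H^d)"
    using Heq2 \<zeta> by (simp add: smult_power)
  hence "lead_coeff (H^d) = \<zeta>^d * lead_coeff (H^d)"
    by (metis coeff_smult)
  hence \<zeta>1: "\<zeta>^d = 1" using Hd0 by (metis leading_coeff_0_iff mult_cancel_right1)
  define A2 where "A2 = smult \<zeta> A2'"
  have pA2: "poly A2 u = \<zeta> * \<omega> * u^k * poly Q (r + b*u^d)" for u
    unfolding A2_def by (simp add: pA2' mult.assoc)
  have HA2: "poly H x = poly A2 (poly S x)" for x
    using \<zeta> unfolding A2_def by (simp add: poly_pcompose)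
  have fA2: "(poly A2 u)^d + c = poly A (r + b*u^d)" for u
  proof -
    have "(poly A2 u)^d = \<zeta>^d * (\<omega> * u^k * poly Q (r + b*u^d))^d"
      by (simp add: pA2 power_mult_distrib mult.assoc)
    also have "\<dots> = a * (b * u^d)^k * (poly Q (r + b*u^d))^d" using \<zeta>1 key by simp
    finally show ?thesis by (simp add: pA)
  qed
  define B2 where "B2 = pcompose S M"
  have E2: "pcompose (poly_iter f n) A2 = pcompose A2 B2"
  proof (rule poly_ext)
    fix u
    have "(poly f ^^ n) (poly A2 u) = (poly f ^^ n1) (poly f (poly A2 u))"
      unfolding n1 by (simp add: funpow_Suc_right del: funpow.simps)
    also have "\<dots> = (poly f ^^ n1) (poly A (r + b*u^d))" using fA2 pf by simp
    also have "\<dots> = poly A2 (poly B2 u)"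
      using pH[symmetric] HA2 unfolding B2_def by (simp add: poly_pcompose pM)
    finally show "poly (pcompose (poly_iter f n) A2) u = poly (pcompose A2 B2) u"
      by (simp add: poly_pcompose poly_iter_poly)
  qed
  have rot: "poly A2 (\<xi>*u) = \<xi>^k * poly A2 u" if "\<xi>^d = 1" for \<xi> u
  proof -
    have "(\<xi>*u)^d = u^d" using that by (simp add: power_mult_distrib)
    hence "poly A2 (\<xi>*u) = \<zeta> * \<omega> * (\<xi>*u)^k * poly Q (r + b*u^d)" by (simp add: pA2)
    thus ?thesis by (simp add: pA2 power_mult_distrib)
  qed
  have polyeq: "pcompose f A2 = pcompose A M"
    by (rule poly_ext) (simp add: poly_pcompose pf fA2 pM)
  have "d * degree A2 = degree A * d"
    using arg_cong[OF polyeq, of degree] d2 sl(2)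
    by (simp add: degree_pcompose f_def degree_f M_def degree_M)
  hence dA2: "degree A2 = degree A" using d2 by simp
  have "degree S > 0"
  proof (rule ccontr)
    assume "\<not> degree S > 0"
    hence "degree (S^d) = 0" using degree_power_le[of S d] by simp
    hence "degree B = 0" unfolding sl(5)
      by (metis add_0 degree_add_le degree_pCons_0 degree_smult_le le_zero_eq)
    thus False using dB by simp
  qed
  hence dB2: "degree B2 > 0" unfolding B2_def using d2 sl(2)
    by (simp add: degree_pcompose M_def degree_M)
  show ?thesis
    using sl(2) dA2 dB2 sl(3) E2[unfolded f_def] rot fA2 by blast
qed


lemma HEQ:
  fixes A B :: "complex poly"
  assumes n0: "n > 0" and E: "pcompose (poly_iter (monom 1 d + [:c:]) n) A = pcompose A B"
  shows "\<exists>H. pcompose A B - [:c:] = H ^ d"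
proof -
  define f where "f = monom (1::complex) d + [:c:]"
  have pf: "poly f y = y^d + c" for y unfolding f_def by (rule poly_f)
  obtain n1 where n1: "n = Suc n1" using n0 by (cases n) auto
  define H where "H = pcompose (poly_iter f n1) A"
  have pH: "poly H x = (poly f ^^ n1) (poly A x)" for x
    unfolding H_def by (simp add: poly_pcompose poly_iter_poly)
  have Ef: "(poly f ^^ n) (poly A x) = poly A (poly B x)" for x
    using arg_cong[OF E[folded f_def], of poly] by (metis poly_iter_poly poly_pcompose)
  have "pcompose A B - [:c:] = H ^ d"
  proof (rule poly_ext)
    show "poly (pcompose A B - [:c:]) x = poly (H ^ d) x" for x
    proof -
      have "poly A (poly B x) = poly f ((poly f ^^ n1) (poly A x))"
        using Ef[of x] unfolding n1 by simp
      thus ?thesis by (simp add: poly_pcompose pH pf)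
    qed
  qed
  thus ?thesis by blast
qed

lemma unity_coprime:
  fixes u :: complex
  assumes "u^k = 1" "u^d = 1" "coprime k d" "k \<noteq> 0"
  shows "u = 1"
proof -
  obtain x y where xy: "k * x = d * y + gcd k d" using bezout_nat[OF assms(4)] by blast
  hence xy': "k * x = d * y + 1" using assms(3) by simp
  have "u^(k*x) = 1" using assms(1) by (simp add: power_mult)
  moreover have "u^(d*y+1) = u" using assms(2) by (simp add: power_mult)
  ultimately show ?thesis using xy' by simp
qed

lemma arith1:
  fixes d m N :: nat
  assumes "d \<ge> 2" "m \<ge> 2" "d * N \<le> d + m - 1" "d * (m - N) \<le> m - 1" "N \<le> m"
  shows "d = 2"
proof (rule ccontr)
  assume "d \<noteq> 2"
  hence d3: "d \<ge> 3" using assms by simp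
  have "d * m = d * (m - N) + d * N" using assms(5) by (simp add: diff_mult_distrib2)
  hence e1: "d * m \<le> m - 1 + d + m - 1" using assms by linarith
  have "(d - 3) * m \<ge> (d - 3) * 2" using assms by simp
  moreover have "d * m = 3 * m + (d - 3) * m"
  proof -
    have "d = 3 + (d - 3)" using d3 by simp
    hence "d * m = (3 + (d - 3)) * m" by simp
    thus ?thesis by (simp only: add_mult_distrib)
  qed
  ultimately have "d * m \<ge> 3 * m + (d - 3) * 2" by linarith
  moreover have "(d - 3) * 2 = 2 * d - 6" by simp
  ultimately show False using e1 d3 assms by linarith
qed

lemma SYM:
  fixes A B :: "complex poly"
  assumes d2: "d \<ge> 2" and n0: "n > 0" and c0: "c \<noteq> 0" and dA: "degree A \<ge> 2"
    and dB: "degree B > 0" and cop: "coprime (degree A) d" and copk: "coprime k d"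
    and E: "pcompose (poly_iter (monom 1 d + [:c:]) n) A = pcompose A B"
    and rot: "\<forall>\<xi> u. \<xi>^d = 1 \<longrightarrow> poly A (\<xi>*u) = \<xi>^k * poly A u"
  shows "d = 2 \<and> (\<forall>w. card {z. poly A z = w} < degree A \<longrightarrow> w = c \<or> w = -c)
         \<and> card {z. poly A z = -c} < degree A"
proof -
  define m where "m = degree A"
  have dA0: "degree A > 0" using dA by simp
  obtain H where Heq: "pcompose A B - [:c:] = H ^ d" using HEQ[OF n0 E] by blast
  obtain s a k' Q b S where sl: "a \<noteq> 0" "b \<noteq> 0" "coprime k' d"
      "A - [:c:] = smult a ([:-s,1:]^k' * Q^d)" "B = [:s:] + smult b (S^d)"
    using SL[OF d2 dA0 dB cop Heq] by blast
  have k'0: "k' \<noteq> 0" using sl(3) d2 by (cases "k' = 0") auto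
  have k0: "k \<noteq> 0" using copk d2 by (cases "k = 0") auto
  have Ac0: "A - [:c:] \<noteq> 0" using minus_const_nz[OF dA0] .
  hence Q0: "Q \<noteq> 0" using sl(4) d2 by (cases "Q = 0") (auto simp: power_0_left)
  have "m = degree (A - [:c:])" unfolding m_def using degree_minus_const[OF dA0] by simp
  also have "\<dots> = k' + d * degree Q"
    using sl(1,4) Q0 by (simp add: degree_mult_eq degree_power_eq)
  finally have mQ: "m = k' + d * degree Q" .
  define N where "N = card {z. poly A z = c}"
  have "{z. poly A z = c} \<subseteq> insert s {z. poly Q z = 0}"
  proof
    fix z assume "z \<in> {z. poly A z = c}"
    hence "poly (A - [:c:]) z = 0" by simp
    hence "a * (z - s)^k' * (poly Q z)^d = 0" using sl(4) by simp
    thus "z \<in> insert s {z. poly Q z = 0}" using sl(1) by auto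
  qed
  hence "N \<le> card (insert s {z. poly Q z = 0})"
    unfolding N_def by (intro card_mono) (auto intro: poly_roots_finite[OF Q0])
  also have "\<dots> \<le> Suc (card {z. poly Q z = 0})" by (rule card_insert_le_m1) (auto simp: card_insert_if)
  also have "\<dots> \<le> Suc (degree Q)" using card_poly_roots_bound[OF Q0] by simp
  finally have "N \<le> Suc (degree Q)" .
  hence "d * N \<le> d * Suc (degree Q)" by (rule mult_le_mono2)
  hence NB: "d * N \<le> d + m - 1" using mQ k'0 by simp
  have Nm: "N \<le> m" unfolding N_def m_def by (rule fib_card_le[OF dA0])
  have fibrot: "card {z. poly A z = \<xi>^k * c} = N" if "\<xi>^d = 1" for \<xi>
  proof -
    have \<xi>0: "\<xi> \<noteq> 0" using that d2 by (cases "\<xi> = 0") (auto simp: power_0_left)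
    have iv: "(inverse \<xi>)^d = 1" using that by (simp add: power_inverse)
    have "{z. poly A z = \<xi>^k * c} = (\<lambda>z. \<xi> * z) ` {z. poly A z = c}"
    proof (intro set_eqI iffI)
      fix y assume "y \<in> {z. poly A z = \<xi>^k * c}"
      hence y: "poly A y = \<xi>^k * c" by simp
      have "poly A (inverse \<xi> * y) = (inverse \<xi>)^k * poly A y" using rot iv by blast
      also have "\<dots> = c" using y \<xi>0 by (simp add: power_inverse field_simps)
      finally have "inverse \<xi> * y \<in> {z. poly A z = c}" by simp
      moreover have "y = \<xi> * (inverse \<xi> * y)" using \<xi>0 by simp
      ultimately show "y \<in> (\<lambda>z. \<xi> * z) ` {z. poly A z = c}" by blast
    next
      fix y assume "y \<in> (\<lambda>z. \<xi> * z) ` {z. poly A z = c}"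
      then obtain z where "y = \<xi> * z" "poly A z = c" by blast
      thus "y \<in> {z. poly A z = \<xi>^k * c}" using rot that by auto
    qed
    moreover have "inj_on (\<lambda>z. \<xi> * z) {z. poly A z = c}" using \<xi>0 by (auto simp: inj_on_def)
    ultimately show ?thesis unfolding N_def by (simp add: card_image)
  qed
  define U where "U = {\<xi>::complex. \<xi>^d = 1}"
  have cU: "card U = d" unfolding U_def using card_roots_unity_eq d2 by simp
  hence fU: "finite U" using d2 by (metis card_ge_0_finite not_numeral_le_zero zero_less_iff_neq_zero card_0_eq)
  define W where "W = (\<lambda>\<xi>. \<xi>^k * c) ` U"
  have inj: "inj_on (\<lambda>\<xi>. \<xi>^k * c) U"
  proof (rule inj_onI)
    fix x y assume xy: "x \<in> U" "y \<in> U" "x^k * c = y^k * c"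
    have y0: "y \<noteq> 0" using xy(2) d2 unfolding U_def by (cases "y = 0") (auto simp: power_0_left)
    have "(x / y)^k = 1" using xy(3) c0 y0 by (simp add: power_divide)
    moreover have "(x / y)^d = 1" using xy(1,2) unfolding U_def by (simp add: power_divide)
    ultimately have "x / y = 1" using unity_coprime copk k0 by blast
    thus "x = y" using y0 by simp
  qed
  have sumW: "(\<Sum>w\<in>W. m - card {z. poly A z = w}) = d * (m - N)"
  proof -
    have "(\<Sum>w\<in>W. m - card {z. poly A z = w}) = (\<Sum>\<xi>\<in>U. m - card {z. poly A z = \<xi>^k * c})"
      unfolding W_def using inj by (simp add: sum.reindex)
    also have "\<dots> = (\<Sum>\<xi>\<in>U. m - N)" using fibrot unfolding U_def by simp
    finally show ?thesis using cU by simp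
  qed
  have "d * (m - N) \<le> m - 1"
    using RH[OF dA0, of W] fU sumW unfolding W_def m_def by simp
  hence dd: "d = 2" using arith1[OF d2 dA[folded m_def] NB _ Nm] by simp
  have W2: "W = {c, -c}"
  proof -
    have "U = {1, -1}" unfolding U_def dd using power2_eq_1_iff by auto
    moreover have "odd k" using copk dd by (metis coprime_right_2_iff_odd)
    ultimately show ?thesis unfolding W_def by simp
  qed
  have part2: "w = c \<or> w = -c" if "card {z. poly A z = w} < m" for w
  proof (rule ccontr)
    assume "\<not> (w = c \<or> w = -c)"
    hence wW: "w \<notin> W" using W2 by simp
    have "(\<Sum>w\<in>insert w W. m - card {z. poly A z = w}) \<le> m - 1"
      using RH[OF dA0, of "insert w W"] fU unfolding W_def m_def by simp
    hence "(m - card {z. poly A z = w}) + d * (m - N) \<le> m - 1"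
      using wW fU sumW unfolding W_def by simp
    thus False using that NB Nm unfolding dd by linarith
  qed
  have "card {z. poly A z = -c} = N"
    using fibrot[of "-1"] dd copk by (simp add: coprime_right_2_iff_odd)
  hence part3: "card {z. poly A z = -c} < m" using NB dA unfolding m_def dd by linarith
  show ?thesis using dd part2 part3 unfolding m_def by blast
qed


lemma lin_conj_id: "lin_conj f f"
  unfolding lin_conj_def
  by (rule exI[of _ "[:0,1:]"]) (simp add: pcompose_pCons)

theorem lemma7p3:
  fixes d n :: nat and c :: complex and A B :: "complex poly"
  assumes "d \<ge> 2"
    and "\<not> lin_conj (monom 1 d + [:c:]) (monom 1 d)"
    and "\<not> lin_conj (monom 1 d + [:c:]) (cheb d)"
    and "\<not> lin_conj (monom 1 d + [:c:]) (- cheb d)"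
    and "n > 0"
    and "degree A > 0" and "degree B > 0"
    and "pcompose (poly_iter (monom 1 d + [:c:]) n) A = pcompose A B"
    and "gcd d (degree A) = 1"
  shows "degree A = 1"
proof (rule ccontr)
  assume ne1: "degree A \<noteq> 1"
  note d2 = assms(1) and n0 = assms(5) and dA0 = assms(6) and dB = assms(7) and E = assms(8)
  have dA: "degree A \<ge> 2" using ne1 dA0 by simp
  have c0: "c \<noteq> 0"
  proof
    assume "c = 0"
    hence "monom 1 d + [:c:] = monom 1 d" by simp
    thus False using assms(2) lin_conj_id by metis
  qed
  have cop: "coprime (degree A) d" using assms(9) by (simp add: coprime_iff_gcd_eq_1 gcd.commute)
  obtain A2 B2 k r b where C1: "b \<noteq> 0" "degree A2 = degree A" "degree B2 > 0" "coprime k d"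
     "pcompose (poly_iter (monom 1 d + [:c:]) n) A2 = pcompose A2 B2"
     "\<forall>\<xi> u. \<xi>^d = 1 \<longrightarrow> poly A2 (\<xi>*u) = \<xi>^k * poly A2 u"
     "\<forall>u. (poly A2 u)^d + c = poly A (r + b*u^d)"
    using CONS[OF d2 n0 dA0 dB cop E] by blast
  have S1: "d = 2" "card {z. poly A2 z = -c} < degree A2"
    using SYM[OF d2 n0 c0 _ C1(3) _ C1(4) C1(5) C1(6)] dA cop C1(2) by auto
  have dA2: "degree A2 > 0" using C1(2) dA0 by simp
  obtain z0 where z0: "poly A2 z0 = -c" "poly (pderiv A2) z0 = 0"
    using crit_iff[OF dA2] S1(2) by blast
  obtain A3 B3 k3 r2 b2 where C2: "b2 \<noteq> 0" "degree A3 = degree A" "degree B3 > 0" "coprime k3 d"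
     "pcompose (poly_iter (monom 1 d + [:c:]) n) A3 = pcompose A3 B3"
     "\<forall>\<xi> u. \<xi>^d = 1 \<longrightarrow> poly A3 (\<xi>*u) = \<xi>^k3 * poly A3 u"
     "\<forall>u. (poly A3 u)^d + c = poly A2 (r2 + b2*u^d)"
    using CONS[OF d2 n0 dA2 C1(3) _ C1(5)] cop C1(2) by auto
  have S2: "\<forall>w. card {z. poly A3 z = w} < degree A3 \<longrightarrow> w = c \<or> w = -c"
    using SYM[OF d2 n0 c0 _ C2(3) _ C2(4) C2(5) C2(6)] dA cop C2(2) by auto
  have dA3: "degree A3 > 0" using C2(2) dA0 by simp
  obtain x0 where x0: "x0^2 = (z0 - r2) / b2" using nth_root_exists[of 2] by auto
  have Mx0: "r2 + b2 * x0^2 = z0" using x0 C2(1) by simp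
  define f where "f = monom (1::complex) 2 + [:c:]"
  define M where "M = [:r2:] + smult b2 (monom (1::complex) 2)"
  have pM: "poly M u = r2 + b2 * u^2" for u unfolding M_def by (simp add: poly_monom)
  have peq: "pcompose f A3 = pcompose A2 M"
    by (rule poly_ext) (use C2(7) S1(1) in \<open>simp add: poly_pcompose f_def poly_f pM poly_monom\<close>)
  have "pderiv (pcompose f A3) = pderiv (pcompose A2 M)" using peq by simp
  hence "poly (pderiv f) (poly A3 x0) * poly (pderiv A3) x0 = poly (pderiv A2) (poly M x0) * poly (pderiv M) x0"
    by (metis pderiv_pcompose poly_pcompose poly_mult)
  also have "\<dots> = 0" using z0(2) Mx0 pM by simp
  finally have "2 * poly A3 x0 * poly (pderiv A3) x0 = 0"
    unfolding f_def by (simp add: pderiv_add pderiv_monom poly_monom pderiv_pCons)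
  moreover have sq: "(poly A3 x0)^2 = -2 * c"
    using C2(7)[rule_format, of x0] S1(1) Mx0 z0(1) by (simp add: eq_neg_iff_add_eq_0 add.commute)
  moreover have "poly A3 x0 \<noteq> 0" using sq c0 by (cases "poly A3 x0 = 0") auto
  ultimately have "poly (pderiv A3) x0 = 0" by simp
  hence "card {z. poly A3 z = poly A3 x0} < degree A3" using crit_iff[OF dA3] by blast
  hence "poly A3 x0 = c \<or> poly A3 x0 = -c" using S2 by blast
  hence "c^2 = -2 * c" using sq by auto
  hence "c * c = (-2) * c" by (simp add: power2_eq_square)
  hence cm2: "c = -2" using c0 by (metis mult_right_cancel)
  have "cheb d = monom 1 d + [:c:]"
    by (rule poly_ext) (simp add: S1(1) cm2 numeral_2_eq_2 poly_monom)
  thus False using assms(3) lin_conj_id by metis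
qed

end
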